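(* Let $R\subseteq\mathbb{R}^2$ be open and let $f:R\to\mathbb{R}^2$ be a $C^1$ mapping such that its critical set $S$ is nowhere dense. Suppose that $C(f)$ has non-empty interior. Then the points $w$ with $\mathrm{Val}(f,w)=\infty$ are dense in the interior of $C(f)$.
   Context: Write $f=(u,v)$; $J_f=u_xv_y-u_yv_x$ and $S=\{z\in R: J_f(z)=0\}$. $C(f)$ is the set of finite points $\zeta\in\mathbb{R}^2$ for which there is a sequence $(z_n)\subset R$ converging to a point of $\partial R$ or with $|z_n|\to\infty$, such that $f(z_n)\to\zeta$. $\mathrm{Val}(f,w)$ is the number (possibly infinite) of distinct $z\in R$ with $f(z)=w$. *)

theory Defs
  imports "HOL-Analysis.Analysis"
begin

definition C1_on :: "(real \<times> real) set \<Rightarrow> (real \<times> real \<Rightarrow> real \<times> real) \<Rightarrow> bool" where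
  "C1_on R f \<longleftrightarrow> (\<exists>f' :: real \<times> real \<Rightarrow> (real \<times> real) \<Rightarrow>\<^sub>L (real \<times> real).
      (\<forall>z\<in>R. (f has_derivative blinfun_apply (f' z)) (at z)) \<and> continuous_on R f')"

definition jacobian :: "(real \<times> real \<Rightarrow> real \<times> real) \<Rightarrow> real \<times> real \<Rightarrow> real" where
  "jacobian f z = (let D = frechet_derivative f (at z);
                       ux = fst (D (1,0)); vx = snd (D (1,0));
                       uy = fst (D (0,1)); vy = snd (D (0,1))
                   in ux * vy - uy * vx)"

definition critical_set :: "(real \<times> real) set \<Rightarrow> (real \<times> real \<Rightarrow> real \<times> real) \<Rightarrow> (real \<times> real) set" where
  "critical_set R f = {z \<in> R. jacobian f z = 0}"

definition cluster_set :: "(real \<times> real) set \<Rightarrow> (real \<times> real \<Rightarrow> real \<times> real) \<Rightarrow> (real \<times> real) set" where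
  "cluster_set R f = {\<zeta>. \<exists>z :: nat \<Rightarrow> real \<times> real. (\<forall>n. z n \<in> R) \<and>
       ((\<exists>p\<in>frontier R. z \<longlonglongrightarrow> p) \<or> filterlim (\<lambda>n. norm (z n)) at_top sequentially) \<and>
       (\<lambda>n. f (z n)) \<longlonglongrightarrow> \<zeta>}"

definition val_infinite :: "(real \<times> real) set \<Rightarrow> (real \<times> real \<Rightarrow> real \<times> real) \<Rightarrow> real \<times> real \<Rightarrow> bool" where
  "val_infinite R f w \<longleftrightarrow> infinite {z \<in> R. f z = w}"

end

theory Submission
  imports Defs
begin

lemma lin_pair:
  fixes L :: "(real \<times> real) \<Rightarrow>\<^sub>L (real \<times> real)"
  shows "blinfun_apply L (a,b) = a *\<^sub>R blinfun_apply L (1,0) + b *\<^sub>R blinfun_apply L (0,1)"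
proof -
  have "(a,b) = a *\<^sub>R (1::real,0::real) + b *\<^sub>R (0,1)" by simp
  then show ?thesis by (metis blinfun.add_right blinfun.scaleR_right)
qed

lemma right_inv:
  fixes L :: "(real \<times> real) \<Rightarrow>\<^sub>L (real \<times> real)"
  assumes J: "fst (L (1,0)) * snd (L (0,1)) - fst (L (0,1)) * snd (L (1,0)) \<noteq> 0"
  shows "\<exists>g. bounded_linear g \<and> blinfun_apply L \<circ> g = id"
proof -
  define ux where "ux = fst (L (1,0))"
  define vx where "vx = snd (L (1,0))"
  define uy where "uy = fst (L (0,1))"
  define vy where "vy = snd (L (0,1))"
  define d where "d = ux * vy - uy * vx"
  have d: "d \<noteq> 0" using J by (simp add: d_def ux_def vx_def uy_def vy_def)
  define g where "g = (\<lambda>z::real\<times>real. ((vy * fst z - uy * snd z)/d, (ux * snd z - vx * fst z)/d))"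
  have "linear g"
    by (rule linearI) (auto simp: g_def algebra_simps diff_divide_distrib add_divide_distrib)
  then have "bounded_linear g" using linear_conv_bounded_linear by blast
  moreover have "blinfun_apply L \<circ> g = id"
  proof
    fix z :: "real \<times> real"
    obtain s t where z: "z = (s,t)" by (cases z)
    have "L (g z) = L ((vy * s - uy * t)/d, (ux * t - vx * s)/d)"
      by (simp add: g_def z)
    also have "\<dots> = ((vy * s - uy * t)/d) *\<^sub>R L (1,0) + ((ux * t - vx * s)/d) *\<^sub>R L (0,1)"
      by (rule lin_pair)
    also have "L (1,0) = (ux, vx)" by (simp add: ux_def vx_def)
    also have "L (0,1) = (uy, vy)" by (simp add: uy_def vy_def)
    finally have "L (g z) = ((vy * s - uy * t)/d * ux + (ux * t - vx * s)/d * uy,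
                 (vy * s - uy * t)/d * vx + (ux * t - vx * s)/d * vy)" by simp
    also have "\<dots> = (s,t)"
    proof -
      have 1: "(vy * s - uy * t)/d * ux + (ux * t - vx * s)/d * uy = s"
        using d unfolding d_def by (simp add: divide_simps) (simp add: algebra_simps)
      have 2: "(vy * s - uy * t)/d * vx + (ux * t - vx * s)/d * vy = t"
        using d unfolding d_def by (simp add: divide_simps) (simp add: algebra_simps)
      show ?thesis using 1 2 by simp
    qed
    finally show "(blinfun_apply L \<circ> g) z = id z" by (simp add: z)
  qed
  ultimately show ?thesis by blast
qed


lemma open_map:
  assumes "open R" "\<forall>z\<in>R. (f has_derivative blinfun_apply (f' z)) (at z)" "p \<in> R"
    "jacobian f p \<noteq> 0" "T \<subseteq> R" "p \<in> interior T"
  shows "f p \<in> interior (f ` T)"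
proof -
  have fd: "frechet_derivative f (at p) = blinfun_apply (f' p)"
    using frechet_derivative_at assms(2,3) by metis
  then obtain g where g: "bounded_linear g" "blinfun_apply (f' p) \<circ> g = id"
    using right_inv[of "f' p"] assms(4) unfolding jacobian_def Let_def by auto
  have cont: "continuous_on R f"
    by (meson assms(2) continuous_at_imp_continuous_on has_derivative_continuous)
  show ?thesis
    by (rule sussmann_open_mapping[OF assms(1) cont assms(3) _ g assms(5,6)]) (use assms(2,3) in auto)
qed

lemma reg_open:
  assumes "open R" "\<forall>z\<in>R. (f has_derivative blinfun_apply (f' z)) (at z)" "continuous_on R f'"
  shows "open {z\<in>R. jacobian f z \<noteq> 0}"
proof -
  define Jc where "Jc z = fst (f' z (1,0)) * snd (f' z (0,1)) - fst (f' z (0,1)) * snd (f' z (1,0))" for z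
  have eq: "jacobian f z = Jc z" if "z \<in> R" for z
  proof -
    have "frechet_derivative f (at z) = blinfun_apply (f' z)"
      using frechet_derivative_at assms(2) that by metis
    then show ?thesis unfolding jacobian_def Jc_def Let_def by simp
  qed
  have c1: "continuous_on R (\<lambda>z. blinfun_apply (f' z) v)" for v
    by (intro continuous_intros assms(3))
  have "continuous_on R Jc" unfolding Jc_def
    by (intro continuous_intros c1)
  then have "open (Jc -` (-{0}) \<inter> R)"
    using continuous_on_open_vimage[OF assms(1)] by blast
  moreover have "{z\<in>R. jacobian f z \<noteq> 0} = Jc -` (-{0}) \<inter> R" using eq by auto
  ultimately show ?thesis by simp
qed


theorem theorem3p9:
  fixes R :: "(real \<times> real) set" and f :: "real \<times> real \<Rightarrow> real \<times> real"
  assumes "open R"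
    and "C1_on R f"
    and "interior (closure (critical_set R f)) = {}"
    and "interior (cluster_set R f) \<noteq> {}"
  shows "interior (cluster_set R f) \<subseteq> closure {w \<in> interior (cluster_set R f). val_infinite R f w}"
proof -
  obtain f' where der: "\<forall>z\<in>R. (f has_derivative blinfun_apply (f' z)) (at z)"
    and cf': "continuous_on R f'"
    using assms(2) unfolding C1_on_def by blast
  define Reg where "Reg = {z\<in>R. jacobian f z \<noteq> 0}"
  define C where "C = cluster_set R f"
  have RegR: "Reg \<subseteq> R" unfolding Reg_def by auto
  have Reg_open: "open Reg" unfolding Reg_def using reg_open[OF assms(1) der cf'] .
  have contf: "continuous_on R f"
    by (meson der continuous_at_imp_continuous_on has_derivative_continuous)
  have om: "f p \<in> interior (f ` T)" if "p \<in> Reg" "T \<subseteq> R" "p \<in> interior T" for p T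
    using open_map[OF assms(1) der, of p T] that unfolding Reg_def by auto
  have dense_reg: "B \<inter> Reg \<noteq> {}" if "open B" "B \<subseteq> R" "B \<noteq> {}" for B
  proof
    assume "B \<inter> Reg = {}"
    then have "B \<subseteq> critical_set R f" using that(2) unfolding Reg_def critical_set_def by auto
    then have "B \<subseteq> closure (critical_set R f)" using closure_subset by blast
    then have "B \<subseteq> interior (closure (critical_set R f))" using that(1) interior_maximal by blast
    then show False using assms(3) that(3) by blast
  qed
  define Pn where "Pn n = {w. \<exists>F. finite F \<and> card F = n \<and> F \<subseteq> Reg \<and> (\<forall>z\<in>F. f z = w)}" for n
  have nbhd: "\<exists>e. (\<forall>p\<in>F. e p > 0 \<and> cball p (e p) \<subseteq> Reg \<and> w \<in> interior (f ` ball p (e p))) \<and>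
      (\<forall>p\<in>F. \<forall>q\<in>F. p \<noteq> q \<longrightarrow> cball p (e p) \<inter> cball q (e q) = {})"
    if F: "finite F" "F \<subseteq> Reg" "\<forall>z\<in>F. f z = w" for F w
  proof -
    have ex: "\<forall>p\<in>F. \<exists>e>0. cball p e \<subseteq> Reg \<and> (\<forall>q\<in>F. q \<noteq> p \<longrightarrow> 3 * e \<le> dist p q)"
    proof
      fix p assume "p \<in> F"
      obtain d where d: "d > 0" "\<forall>x\<in>F. x \<noteq> p \<longrightarrow> d \<le> dist p x"
        using finite_set_avoid[OF F(1)] by blast
      obtain r where r: "r > 0" "ball p r \<subseteq> Reg" using Reg_open F(2) \<open>p \<in> F\<close> openE by blast
      define e0 where "e0 = min (d/3) (r/2)"
      have "e0 > 0" using d r unfolding e0_def by simp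
      moreover have "cball p e0 \<subseteq> ball p r" using r(1) unfolding e0_def by (intro cball_subset_ball_iff[THEN iffD2]) (simp add: min_def)
      moreover have "\<forall>q\<in>F. q \<noteq> p \<longrightarrow> 3 * e0 \<le> dist p q" using d unfolding e0_def by force
      ultimately show "\<exists>e>0. cball p e \<subseteq> Reg \<and> (\<forall>q\<in>F. q \<noteq> p \<longrightarrow> 3 * e \<le> dist p q)"
        using r(2) by blast
    qed
    obtain e where e: "\<forall>p\<in>F. e p > 0 \<and> cball p (e p) \<subseteq> Reg \<and> (\<forall>q\<in>F. q \<noteq> p \<longrightarrow> 3 * e p \<le> dist p q)"
      using bchoice[OF ex] by blast
    have "w \<in> interior (f ` ball p (e p))" if "p \<in> F" for p
    proof -
      have "f p \<in> interior (f ` ball p (e p))"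
      proof (rule om)
        show "p \<in> Reg" using that F(2) by blast
        show "ball p (e p) \<subseteq> R" using e that RegR ball_subset_cball by blast
        show "p \<in> interior (ball p (e p))" using e that by simp
      qed
      then show ?thesis using F(3) that by auto
    qed
    moreover have "cball p (e p) \<inter> cball q (e q) = {}" if "p \<in> F" "q \<in> F" "p \<noteq> q" for p q
    proof (rule ccontr)
      assume "cball p (e p) \<inter> cball q (e q) \<noteq> {}"
      then obtain x where x: "dist p x \<le> e p" "dist q x \<le> e q" by auto
      have "dist p q \<le> dist p x + dist q x" by (metis dist_commute dist_triangle)
      moreover have "3 * e p \<le> dist p q" "3 * e q \<le> dist p q"
        using e that by (auto simp: dist_commute)
      moreover have "dist p q > 0" using that by simp
      ultimately show False using x by linarith
    qed
    ultimately show ?thesis using e by (intro exI[of _ e]) blast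
  qed
  have pick: "\<exists>G. finite G \<and> card G = card F \<and> G \<subseteq> Reg \<and> (\<forall>z\<in>G. f z = y) \<and> G \<subseteq> (\<Union>p\<in>F. cball p (e p))"
    if F: "finite F" and e: "\<forall>p\<in>F. e p > 0 \<and> cball p (e p) \<subseteq> Reg \<and> w \<in> interior (f ` ball p (e p))"
      "\<forall>p\<in>F. \<forall>q\<in>F. p \<noteq> q \<longrightarrow> cball p (e p) \<inter> cball q (e q) = {}"
      and y: "\<forall>p\<in>F. y \<in> f ` ball p (e p)" for F e w y
  proof -
    have "\<forall>p\<in>F. \<exists>x. x \<in> ball p (e p) \<and> f x = y"
    proof
      fix p assume "p \<in> F"
      then have "y \<in> f ` ball p (e p)" using y by blast
      then obtain x where "x \<in> ball p (e p)" "y = f x" by (rule imageE)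
      then show "\<exists>x. x \<in> ball p (e p) \<and> f x = y" by blast
    qed
    from bchoice[OF this] obtain g where g: "\<forall>p\<in>F. g p \<in> ball p (e p) \<and> f (g p) = y" by blast
    have "inj_on g F"
    proof (rule inj_onI)
      fix p q assume "p \<in> F" "q \<in> F" "g p = g q"
      show "p = q"
      proof (rule ccontr)
        assume "p \<noteq> q"
        then have "cball p (e p) \<inter> cball q (e q) = {}" using e(2) \<open>p \<in> F\<close> \<open>q \<in> F\<close> by blast
        moreover have "g p \<in> cball p (e p)"
        proof -
          have "g p \<in> ball p (e p)" using g \<open>p \<in> F\<close> by blast
          then show ?thesis by (rule subsetD[OF ball_subset_cball])
        qed
        moreover have "g q \<in> cball q (e q)"
        proof -
          have "g q \<in> ball q (e q)" using g \<open>q \<in> F\<close> by blast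
          then show ?thesis by (rule subsetD[OF ball_subset_cball])
        qed
        ultimately show False using \<open>g p = g q\<close> by (metis IntI empty_iff)
      qed
    qed
    then have "card (g ` F) = card F" by (simp add: card_image)
    moreover have gK: "g ` F \<subseteq> (\<Union>p\<in>F. cball p (e p))"
    proof
      fix x assume "x \<in> g ` F"
      then obtain p where p: "p \<in> F" "x = g p" by blast
      then have "x \<in> ball p (e p)" using g by blast
      then have "x \<in> cball p (e p)" by (rule subsetD[OF ball_subset_cball])
      then show "x \<in> (\<Union>p\<in>F. cball p (e p))" using p(1) by blast
    qed
    moreover have "g ` F \<subseteq> Reg" using gK e(1) by blast
    ultimately show ?thesis using g F by (intro exI[of _ "g ` F"]) auto
  qed
  have Pn_open: "open (Pn n)" for n
  proof (subst open_subopen, intro ballI)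
    fix w assume "w \<in> Pn n"
    then obtain F where F: "finite F" "card F = n" "F \<subseteq> Reg" "\<forall>z\<in>F. f z = w"
      unfolding Pn_def by blast
    obtain e where e: "\<forall>p\<in>F. e p > 0 \<and> cball p (e p) \<subseteq> Reg \<and> w \<in> interior (f ` ball p (e p))"
      "\<forall>p\<in>F. \<forall>q\<in>F. p \<noteq> q \<longrightarrow> cball p (e p) \<inter> cball q (e q) = {}"
      using nbhd[OF F(1,3,4)] by blast
    define U where "U = (\<Inter>p\<in>F. interior (f ` ball p (e p)))"
    have "open U" unfolding U_def using F(1) by (intro open_INT) auto
    moreover have "w \<in> U" unfolding U_def using e by auto
    moreover have "U \<subseteq> Pn n"
    proof
      fix y assume "y \<in> U"
      have "\<forall>p\<in>F. y \<in> f ` ball p (e p)"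
      proof
        fix p assume "p \<in> F"
        then have "y \<in> interior (f ` ball p (e p))" using \<open>y \<in> U\<close> by (simp add: U_def)
        then show "y \<in> f ` ball p (e p)" by (rule subsetD[OF interior_subset])
      qed
      from pick[OF F(1) e this] obtain G where G: "finite G" "card G = card F" "G \<subseteq> Reg" "\<forall>z\<in>G. f z = y"
        by blast
      show "y \<in> Pn n" unfolding Pn_def using G F(2) by (intro CollectI exI[of _ G]) simp
    qed
    ultimately show "\<exists>T. open T \<and> w \<in> T \<and> T \<subseteq> Pn n" by blast
  qed
  have step: "V \<inter> Pn (Suc n) \<noteq> {}" if w: "w \<in> Pn n" "w \<in> C" and V: "open V" "w \<in> V" for w V n
  proof -
    obtain F where F: "finite F" "card F = n" "F \<subseteq> Reg" "\<forall>z\<in>F. f z = w"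
      using w(1) unfolding Pn_def by blast
    obtain e where e: "\<forall>p\<in>F. e p > 0 \<and> cball p (e p) \<subseteq> Reg \<and> w \<in> interior (f ` ball p (e p))"
      "\<forall>p\<in>F. \<forall>q\<in>F. p \<noteq> q \<longrightarrow> cball p (e p) \<inter> cball q (e q) = {}"
      using nbhd[OF F(1,3,4)] by blast
    define K where "K = (\<Union>p\<in>F. cball p (e p))"
    have Kc: "compact K" unfolding K_def using F(1) by (intro compact_UN) auto
    have KR: "K \<subseteq> R" unfolding K_def using e RegR by blast
    define W where "W = V \<inter> (\<Inter>p\<in>F. interior (f ` ball p (e p)))"
    have Wo: "open W" unfolding W_def using F(1) V(1) by (intro open_Int open_INT) auto
    have wW: "w \<in> W" unfolding W_def using e V by auto
    obtain z where z: "\<forall>n. z n \<in> R"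
      "(\<exists>p\<in>frontier R. z \<longlonglongrightarrow> p) \<or> filterlim (\<lambda>n. norm (z n)) at_top sequentially"
      "(\<lambda>n. f (z n)) \<longlonglongrightarrow> w"
      using w(2) unfolding C_def cluster_set_def by blast
    have ev1: "\<forall>\<^sub>F m in sequentially. z m \<notin> K"
      using z(2)
    proof
      assume "\<exists>p\<in>frontier R. z \<longlonglongrightarrow> p"
      then obtain q where q: "q \<in> frontier R" "z \<longlonglongrightarrow> q" by blast
      have "q \<notin> R" using q(1) assms(1) by (simp add: frontier_def interior_open)
      then have "q \<in> - K" using KR by blast
      moreover have "open (- K)" using Kc compact_imp_closed by blast
      ultimately have "\<forall>\<^sub>F m in sequentially. z m \<in> - K" using q(2) topological_tendstoD by blast
      then show ?thesis by simp
    next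
      assume lim: "filterlim (\<lambda>n. norm (z n)) at_top sequentially"
      obtain B where B: "\<forall>x\<in>K. norm x \<le> B" using Kc compact_imp_bounded bounded_iff by blast
      have "\<forall>\<^sub>F m in sequentially. norm (z m) > B" using lim unfolding filterlim_at_top_dense by blast
      then show ?thesis by eventually_elim (use B in force)
    qed
    have ev2: "\<forall>\<^sub>F m in sequentially. f (z m) \<in> W" using z(3) Wo wW topological_tendstoD by blast
    obtain m where m: "z m \<notin> K" "f (z m) \<in> W"
      using eventually_happens'[OF sequentially_bot eventually_conj[OF ev1 ev2]] by blast
    define B0 where "B0 = (R - K) \<inter> (f -` W \<inter> R)"
    have "open (R - K)" using assms(1) Kc compact_imp_closed by blast
    moreover have "open (f -` W \<inter> R)" using continuous_on_open_vimage[OF assms(1)] contf Wo by blast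
    ultimately have "open B0" unfolding B0_def by blast
    moreover have "z m \<in> B0" unfolding B0_def using m z(1) by blast
    moreover have "B0 \<subseteq> R" unfolding B0_def by blast
    ultimately obtain z' where z': "z' \<in> B0" "z' \<in> Reg" using dense_reg by blast
    define y where "y = f z'"
    have yW: "y \<in> W" using z' unfolding B0_def y_def by blast
    have "\<forall>p\<in>F. y \<in> f ` ball p (e p)"
    proof
      fix p assume "p \<in> F"
      then have "y \<in> interior (f ` ball p (e p))" using yW by (simp add: W_def)
      then show "y \<in> f ` ball p (e p)" by (rule subsetD[OF interior_subset])
    qed
    from pick[OF F(1) e this] obtain G where G: "finite G" "card G = n" "G \<subseteq> Reg" "\<forall>z\<in>G. f z = y" "G \<subseteq> K"
      using F(2) unfolding K_def by blast
    have "z' \<notin> G" using z'(1) G(5) unfolding B0_def by blast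
    then have "card (insert z' G) = Suc n" using G by simp
    then have "y \<in> Pn (Suc n)" unfolding Pn_def
      using G z'(2) y_def by (intro CollectI exI[of _ "insert z' G"]) auto
    moreover have "y \<in> V" using yW unfolding W_def by blast
    ultimately show ?thesis by blast
  qed
  have dens: "interior C \<subseteq> closure (Pn n \<inter> interior C)" for n
  proof (induction n)
    case 0
    have "Pn 0 = UNIV" unfolding Pn_def by (auto intro: exI[of _ "{}"])
    then show ?case using closure_subset by auto
  next
    case (Suc n)
    show ?case
    proof
      fix x assume x: "x \<in> interior C"
      show "x \<in> closure (Pn (Suc n) \<inter> interior C)"
        unfolding closure_approachable
      proof (intro allI impI)
        fix \<epsilon> :: real assume "\<epsilon> > 0"
        have "x \<in> closure (Pn n \<inter> interior C)" using Suc x by blast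
        then obtain y where y: "y \<in> Pn n \<inter> interior C" "dist y x < \<epsilon>"
          using \<open>\<epsilon> > 0\<close> unfolding closure_approachable by blast
        define V where "V = ball x \<epsilon> \<inter> interior C"
        have "open V" "y \<in> V" unfolding V_def using y by (auto simp: dist_commute)
        moreover have "y \<in> C" using y interior_subset by blast
        ultimately have "V \<inter> Pn (Suc n) \<noteq> {}" using step y by blast
        then obtain y' where "y' \<in> V" "y' \<in> Pn (Suc n)" by blast
        then show "\<exists>y\<in>Pn (Suc n) \<inter> interior C. dist y x < \<epsilon>"
          unfolding V_def by (auto simp: dist_commute)
      qed
    qed
  qed
  show ?thesis unfolding C_def[symmetric]
  proof
    fix x assume x: "x \<in> interior C"
    show "x \<in> closure {w \<in> interior C. val_infinite R f w}"
      unfolding closure_approachable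
    proof (intro allI impI)
      fix \<epsilon> :: real assume "\<epsilon> > 0"
      obtain r0 where r0: "r0 > 0" "ball x r0 \<subseteq> interior C"
        using x open_interior openE by blast
      define r where "r = min (r0/2) (\<epsilon>/2)"
      have r: "r > 0" "r < \<epsilon>" "cball x r \<subseteq> interior C"
        using r0 \<open>\<epsilon> > 0\<close> unfolding r_def by (auto simp: subset_eq)
      define S where "S = cball x r"
      define \<G> where "\<G> = range (\<lambda>n. Pn n \<inter> S)"
      have "S \<subseteq> closure (\<Inter>\<G>)"
      proof (rule Baire)
        show "closed S" unfolding S_def by simp
        show "countable \<G>" unfolding \<G>_def by simp
      next
        fix T assume "T \<in> \<G>"
        then obtain n where T: "T = Pn n \<inter> S" unfolding \<G>_def by blast
        have "openin (top_of_set S) T" unfolding T using Pn_open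
          by (metis inf_commute openin_open_Int)
        moreover have "S \<subseteq> closure T"
        proof -
          have "ball x r \<subseteq> ball x r \<inter> closure (Pn n \<inter> interior C)"
            using dens[of n] r(3) ball_subset_cball by blast
          also have "\<dots> \<subseteq> closure (ball x r \<inter> (Pn n \<inter> interior C))"
            by (rule open_Int_closure_subset) simp
          also have "\<dots> \<subseteq> closure T" unfolding T S_def
            by (rule closure_mono) (use ball_subset_cball in blast)
          finally have "closure (ball x r) \<subseteq> closure T"
            by (metis closure_closure closure_mono)
          then show ?thesis unfolding S_def using r(1) by simp
        qed
        ultimately show "openin (top_of_set S) T \<and> S \<subseteq> closure T" by blast
      qed
      moreover have "x \<in> S" unfolding S_def using r by simp
      ultimately have "x \<in> closure (\<Inter>\<G>)" by blast
      then obtain w where w: "w \<in> \<Inter>\<G>" "dist w x < \<epsilon>"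
        using \<open>\<epsilon> > 0\<close> unfolding closure_approachable by blast
      have wS: "w \<in> S" using w(1) unfolding \<G>_def by blast
      have wP: "w \<in> Pn n" for n using w(1) unfolding \<G>_def by blast
      have "val_infinite R f w"
        unfolding val_infinite_def
      proof
        assume fin: "finite {z \<in> R. f z = w}"
        obtain F where F: "finite F" "card F = Suc (card {z \<in> R. f z = w})" "F \<subseteq> Reg" "\<forall>z\<in>F. f z = w"
          using wP unfolding Pn_def by blast
        have "F \<subseteq> {z \<in> R. f z = w}" using F RegR by blast
        then have "card F \<le> card {z \<in> R. f z = w}" using card_mono fin by blast
        then show False using F(2) by simp
      qed
      then show "\<exists>y\<in>{w \<in> interior C. val_infinite R f w}. dist y x < \<epsilon>"
        using wS r(3) w(2) unfolding S_def by blast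
    qed
  qed
qed

end
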